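(* Let $n\ge2$ be an integer, $\nu\in\{1,2,\dots,n\}$ and $N=2n+1$. Let $z_1,\dots,z_N$ be the roots of the polynomial \[s_n(z)+z^Ns_n(1/z),\qquad s_n(z):=\sum_{j=0}^q\frac{(-z^\nu)^j}{\nu^jj!},\qquad q:=\lfloor n/\nu\rfloor.\] Then all $z_k$ lie on the unit circle, the numbers $t_k:=\arg z_k\in[0,2\pi)$ are pairwise distinct, and for every trigonometric polynomial \[T_n(t)=\sum_{m=1}^n\tau_m(t),\qquad\tau_m(t)=a_m\cos mt+b_m\sin mt,\quad a_m,b_m\in\mathbb{R},\] the identity $\tau_\nu(t)\equiv\sum_{k=1}^NT_n(t-t_k)$ holds for all real $t$. *)

theory Defs
  imports "HOL-Analysis.Analysis" "HOL-Computational_Algebra.Polynomial"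
begin

definition s_poly :: "nat \<Rightarrow> nat \<Rightarrow> complex poly" where
  "s_poly n \<nu> = (\<Sum>j\<le>n div \<nu>. smult ((-1)^j / (of_nat (\<nu>^j) * of_nat (fact j))) (monom 1 (\<nu>*j)))"

text \<open>z^N s_n(1/z) with N = 2n+1, written out (note nu*j \<le> n < N).\<close>
definition s_refl_poly :: "nat \<Rightarrow> nat \<Rightarrow> complex poly" where
  "s_refl_poly n \<nu> = (\<Sum>j\<le>n div \<nu>. smult ((-1)^j / (of_nat (\<nu>^j) * of_nat (fact j))) (monom 1 (2*n+1 - \<nu>*j)))"

definition P_poly :: "nat \<Rightarrow> nat \<Rightarrow> complex poly" where
  "P_poly n \<nu> = s_poly n \<nu> + s_refl_poly n \<nu>"

definition tau :: "(nat \<Rightarrow> real) \<Rightarrow> (nat \<Rightarrow> real) \<Rightarrow> nat \<Rightarrow> real \<Rightarrow> real" where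
  "tau a b m t = a m * cos (real m * t) + b m * sin (real m * t)"

definition trig_T :: "(nat \<Rightarrow> real) \<Rightarrow> (nat \<Rightarrow> real) \<Rightarrow> nat \<Rightarrow> real \<Rightarrow> real" where
  "trig_T a b n t = (\<Sum>m=1..n. tau a b m t)"

end

theory Submission
  imports Defs "HOL-Computational_Algebra.Polynomial_FPS" "HOL-Computational_Algebra.Fundamental_Theorem_Algebra"
begin


definition cc :: "nat \<Rightarrow> nat \<Rightarrow> complex" where
  "cc \<nu> j = (-1)^j / (of_nat (\<nu>^j) * of_nat (fact j))"

lemma poly_s: "poly (s_poly n \<nu>) x = (\<Sum>j\<le>n div \<nu>. cc \<nu> j * x^(\<nu>*j))"
  by (simp add: s_poly_def poly_sum poly_monom cc_def)

lemma poly_sr: "poly (s_refl_poly n \<nu>) x = (\<Sum>j\<le>n div \<nu>. cc \<nu> j * x^(2*n+1-\<nu>*j))"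
  by (simp add: s_refl_poly_def poly_sum poly_monom cc_def)

lemma pderiv_sum': "pderiv (\<Sum>x\<in>A. f x) = (\<Sum>x\<in>A. pderiv (f x))"
  using higher_pderiv_sum[of 1 f A] by simp

lemma xpow_pred: "x * (x::complex)^(k-1) * of_nat k = x^k * of_nat k"
  by (cases k) auto

lemma poly_ds: "x * poly (pderiv (s_poly n \<nu>)) x = (\<Sum>j\<le>n div \<nu>. cc \<nu> j * of_nat (\<nu>*j) * x^(\<nu>*j))"
  apply (simp add: s_poly_def poly_sum poly_monom cc_def pderiv_sum' pderiv_smult pderiv_monom sum_distrib_left)
  apply (rule sum.cong, simp)
  using xpow_pred[of x "\<nu>*_"] by (simp add: algebra_simps)

lemma poly_dsr: "x * poly (pderiv (s_refl_poly n \<nu>)) x = (\<Sum>j\<le>n div \<nu>. cc \<nu> j * of_nat (2*n+1-\<nu>*j) * x^(2*n+1-\<nu>*j))"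
  apply (simp add: s_refl_poly_def poly_sum poly_monom cc_def pderiv_sum' pderiv_smult pderiv_monom sum_distrib_left)
  apply (rule sum.cong, simp)
  using xpow_pred[of x "2*n+1-\<nu>*_"] by (simp add: algebra_simps)

lemma cnj_cc[simp]: "cnj (cc \<nu> j) = cc \<nu> j"
  by (simp add: cc_def)

lemma nuj_le: "\<nu> * j \<le> n" if "j \<le> n div \<nu>" for j n \<nu> :: nat
  using that by (metis div_times_less_eq_dividend le_trans mult.commute mult_le_mono2)



definition fe :: "nat \<Rightarrow> complex \<Rightarrow> complex" where
  "fe q w = (\<Sum>j\<le>q. w^j / of_nat (fact j))"

definition dd :: "nat \<Rightarrow> real" where
  "dd j = 1 / fact (j-1) - 1 / fact j"

lemma aux_field: "(F::complex) \<noteq> 0 \<Longrightarrow> k \<noteq> 0 \<Longrightarrow> - (A/F) + (1-w)*A/(k*F) = -((1/F - 1/(k*F))*A) - w*A/(k*F)"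
  by (simp add: field_simps)

lemma aux3: "(1 - S) + (-(C*A) - D) = 1 - (S + C*A) - (D::complex)"
  by simp

lemma fe_id: "(1-w) * fe q w = 1 - (\<Sum>j\<in>{1..q}. of_real (dd j) * w^j) - w^(Suc q) / of_nat (fact q)"
proof (induction q)
  case 0
  then show ?case by (simp add: fe_def)
next
  case (Suc q)
  have "(1-w) * fe (Suc q) w = (1-w) * fe q w + (1-w) * w^(Suc q) / of_nat (fact (Suc q))"
    by (simp add: fe_def algebra_simps)
  also have "\<dots> = (1-w) * fe q w + (1-w) * w^(Suc q) / (of_nat (Suc q) * of_nat (fact q))"
    by (simp only: fact_Suc of_nat_mult of_nat_id)
  also have "\<dots> = (1 - (\<Sum>j\<in>{1..q}. of_real (dd j) * w^j)) + (- (w^(Suc q) / of_nat (fact q))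
      + (1-w) * w^(Suc q) / (of_nat (Suc q) * of_nat (fact q)))" unfolding Suc.IH by (simp only: diff_conv_add_uminus add.assoc)
  also have "\<dots> = (1 - (\<Sum>j\<in>{1..q}. of_real (dd j) * w^j)) + (-((1/of_nat (fact q) - 1/(of_nat (Suc q) * of_nat (fact q)))* w^(Suc q))
      - w * w^(Suc q) / (of_nat (Suc q) * of_nat (fact q)))"
    by (subst aux_field) (auto simp del: of_nat_Suc)
  also have "\<dots> = 1 - ((\<Sum>j\<in>{1..q}. of_real (dd j) * w^j) + (1/of_nat (fact q) - 1/(of_nat (Suc q) * of_nat (fact q)))* w^(Suc q))
      - w * w^(Suc q) / (of_nat (Suc q) * of_nat (fact q))"
    by (rule aux3)
  finally have ch: "(1-w) * fe (Suc q) w = 1 - ((\<Sum>j\<in>{1..q}. of_real (dd j) * w^j) + (1/of_nat (fact q) - 1/(of_nat (Suc q) * of_nat (fact q)))* w^(Suc q))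
      - w * w^(Suc q) / (of_nat (Suc q) * of_nat (fact q))" .
  have ddq: "of_real (dd (Suc q)) = 1/(of_nat (fact q)::complex) - 1/(of_nat (Suc q) * of_nat (fact q))"
    by (simp add: dd_def)
  have sumeq: "(\<Sum>j\<in>{1..Suc q}. of_real (dd j) * w^j) = (\<Sum>j\<in>{1..q}. of_real (dd j) * w^j) + of_real (dd (Suc q)) * w^(Suc q)"
    by (simp add: sum.cl_ivl_Suc)
  have facteq: "(of_nat (fact (Suc q))::complex) = of_nat (Suc q) * of_nat (fact q)"
    by (simp only: fact_Suc of_nat_mult of_nat_id)
  show ?case
    unfolding sumeq facteq ddq power_Suc[of w "Suc q"] by (rule ch)
qed

lemma dd_tel: "(\<Sum>j\<in>{1..q}. dd j) + 1 / fact q = 1"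
  by (induction q) (auto simp: dd_def)

lemma dd_nonneg: "dd j \<ge> 0"
  unfolding dd_def by (cases j) (auto simp: divide_simps)

lemma Re_pow_le: "cmod w \<le> 1 \<Longrightarrow> Re (w^j) \<le> 1"
  by (metis abs_le_D1 abs_Re_le_cmod norm_power power_le_one norm_ge_zero order_trans)

lemma Re_ofr_mult: "Re (of_real r * z) = r * Re z"
  by simp

lemma fe_Re: "Re ((1-w) * fe q w) = (\<Sum>j\<in>{1..q}. dd j * (1 - Re (w^j))) + (1 - Re (w^(Suc q))) / fact q"
proof -
  have "Re ((1-w) * fe q w) = 1 - (\<Sum>j\<in>{1..q}. dd j * Re (w^j)) - Re (w^(Suc q)) / fact q"
    unfolding fe_id by (simp only: minus_complex.sel one_complex.sel Re_sum Re_ofr_mult Re_divide_of_nat of_real_of_nat_eq) simp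
  also have "\<dots> = ((\<Sum>j\<in>{1..q}. dd j) + 1 / fact q) - (\<Sum>j\<in>{1..q}. dd j * Re (w^j)) - Re (w^(Suc q)) / fact q"
    using dd_tel[of q] by simp
  also have "\<dots> = (\<Sum>j\<in>{1..q}. dd j * (1 - Re (w^j))) + (1 - Re (w^(Suc q))) / fact q"
    by (simp add: sum_subtractf algebra_simps diff_divide_distrib add_divide_distrib del: power_Suc)
  finally show ?thesis .
qed

lemma Re_eq1: assumes "cmod u \<le> 1" "Re u = 1" shows "u = 1"
proof -
  have "(Re u)^2 + (Im u)^2 \<le> 1" using assms(1) by (metis cmod_power2 power_le_one norm_ge_zero one_power2)
  then have "Im u * Im u \<le> 0" using assms(2) by (simp add: power2_eq_square)
  then have "Im u = 0" by (simp add: mult_le_0_iff) linarith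
  then show ?thesis using assms(2) complex_eqI by auto
qed

lemma fe_nz:
  assumes "cmod w \<le> 1" and "2 \<le> q \<or> cmod w < 1"
  shows "fe q w \<noteq> 0"
proof
  assume f0: "fe q w = 0"
  let ?S = "(\<Sum>j\<in>{1..q}. dd j * (1 - Re (w^j)))"
  let ?T = "(1 - Re (w^(Suc q))) / fact q"
  have nn: "\<forall>j\<in>{1..q}. dd j * (1 - Re (w^j)) \<ge> 0"
    using dd_nonneg Re_pow_le[OF assms(1)] by (simp)
  have S0: "?S \<ge> 0" by (rule sum_nonneg) (use nn in auto)
  have T0: "?T \<ge> 0" using Re_pow_le[OF assms(1), of "Suc q"] by (simp del: power_Suc)
  have "?S + ?T = 0" using fe_Re[of w q] f0 by simp
  then have S: "?S = 0" and T: "?T = 0" using S0 T0 by linarith+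
  have Sall: "\<forall>j\<in>{1..q}. dd j * (1 - Re (w^j)) = 0"
    using S nn sum_nonneg_eq_0_iff[of "{1..q}" "\<lambda>j. dd j * (1 - Re (w^j))"] by blast
  have Tw: "Re (w^(Suc q)) = 1" using T by simp
  have pw: "cmod (w^j) \<le> 1" for j using assms(1) by (simp add: norm_power power_le_one)
  show False
  proof (cases "cmod w < 1")
    case True
    have "cmod (w^(Suc q)) < 1" using True unfolding norm_power by (simp add: power_less_one_iff del: power_Suc)
    then show False using Tw abs_Re_le_cmod[of "w^(Suc q)"] by linarith
  next
    case False
    then have q2: "2 \<le> q" using assms(2) by auto
    have "dd 2 > 0" by (simp add: dd_def)
    moreover have "2 \<in> {1..q}" using q2 by auto
    ultimately have "Re (w^2) = 1" using Sall by (metis mult_eq_0_iff less_irrefl eq_iff_diff_eq_0)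
    then have w2: "w^2 = 1" using Re_eq1 pw by blast
    have "Re (w^3) = 1"
    proof (cases "q = 2")
      case True then show ?thesis using Tw by (simp add: numeral_3_eq_3)
    next
      case False
      then have "3 \<in> {1..q}" using q2 by auto
      moreover have "dd 3 > 0" by (simp add: dd_def fact_numeral)
      ultimately show ?thesis using Sall by force
    qed
    then have w3: "w^3 = 1" using Re_eq1 pw by blast
    have "w = 1" using w2 w3 by (metis power2_eq_square power3_eq_cube mult_1_right mult.assoc)
    then have "fe q w = (\<Sum>j\<le>q. 1 / of_nat (fact j))" by (simp add: fe_def)
    also have "Re \<dots> > 0"
    proof -
      have "Re (1 / (of_nat (fact j)::complex)) > 0" for j
        by (simp only: Re_divide_of_nat one_complex.sel) simp
      then show ?thesis by (simp only: Re_sum) (rule sum_pos, auto)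
    qed
    finally show False using f0 by simp
  qed
qed



lemma ineq1:
  fixes z r :: complex
  assumes "cmod z \<le> 1" "1 \<le> cmod r"
  shows "cmod (1 - r*z) \<le> cmod (cnj z - r)"
proof -
  obtain a b where r: "r = Complex a b" by (cases r)
  obtain c d where z: "z = Complex c d" by (cases z)
  have hz: "c^2 + d^2 \<le> 1" using assms(1) unfolding z cmod_def by simp
  have hr: "1 \<le> a^2 + b^2" using assms(2) unfolding r cmod_def by simp
  have key: "(1 - (c^2+d^2)) * (1 - (a^2+b^2)) \<le> 0"
    using hz hr by (simp add: mult_nonneg_nonpos)
  have "(1 - (a*c - b*d))^2 + (- (a*d) - b*c)^2 \<le> (c - a)^2 + (-d - b)^2"
    using key by (simp add: power2_eq_square algebra_simps)
  then show ?thesis unfolding r z cmod_def by (simp add: real_sqrt_le_iff)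
qed

lemma ineq2:
  fixes z r :: complex
  assumes "cmod z = 1" "1 \<le> cmod r" "z \<noteq> r"
  shows "Re (z / (z - r)) \<le> 1/2"
proof -
  obtain a b where r: "r = Complex a b" by (cases r)
  obtain c d where z: "z = Complex c d" by (cases z)
  have hz: "c^2 + d^2 = 1" using assms(1) unfolding z cmod_def by simp
  have hr: "1 \<le> a^2 + b^2" using assms(2) unfolding r cmod_def by simp
  have D: "(c-a)^2 + (d-b)^2 > 0" using assms(3) unfolding r z
    by (metis complex.expand complex.sel add_nonneg_nonneg order_le_less power2_less_eq_zero_iff
      sum_power2_eq_zero_iff zero_le_power2 right_minus_eq)
  have e: "Re (z / (z - r)) = (c*(c-a) + d*(d-b)) / ((c-a)^2 + (d-b)^2)"
    unfolding r z by (simp add: Re_divide power2_eq_square)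
  have "2 * (c*(c-a) + d*(d-b)) \<le> (c-a)^2 + (d-b)^2"
    using hz hr by (simp add: power2_eq_square algebra_simps)
  then show ?thesis unfolding e using D by (simp add: divide_simps)
qed

lemma root_split:
  fixes p :: "complex poly"
  assumes "degree p = Suc m"
  obtains r q where "p = [:-r,1:] * q" "degree q = m" "q \<noteq> 0" "\<And>x. poly q x = 0 \<Longrightarrow> poly p x = 0"
proof -
  have "\<not> constant (poly p)" using assms by (simp add: constant_degree)
  then obtain r where "poly p r = 0" using fundamental_theorem_of_algebra by blast
  then obtain q where pq: "p = [:-r,1:] * q" using poly_eq_0_iff_dvd by (metis dvdE)
  have "p \<noteq> 0" using assms by auto
  then have q0: "q \<noteq> 0" using pq by auto
  have "degree ([:-r,1:] * q) = degree [:-r,1:] + degree q" by (rule degree_mult_eq) (use q0 in auto)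
  then have "degree p = 1 + degree q" using pq by simp
  then have "degree q = m" using assms by simp
  then show ?thesis using that pq q0 by (simp add: pq)
qed

lemma L1:
  fixes p :: "complex poly"
  assumes "p \<noteq> 0" "\<And>r. poly p r = 0 \<Longrightarrow> 1 \<le> cmod r" "cmod z \<le> 1"
  shows "cmod (poly (reflect_poly p) z) \<le> cmod (poly p (cnj z))"
  using assms(1,2)
proof (induction "degree p" arbitrary: p)
  case 0
  then obtain c where "p = [:c:]" by (metis degree_eq_zeroE)
  then show ?case by simp
next
  case (Suc m)
  obtain r q where pq: "p = [:-r,1:] * q" "degree q = m" "q \<noteq> 0" "\<And>x. poly q x = 0 \<Longrightarrow> poly p x = 0"
    using root_split[OF Suc(2)[symmetric]] by blast
  have r1: "1 \<le> cmod r" using Suc(4)[of r] pq(1) by simp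
  have IH: "cmod (poly (reflect_poly q) z) \<le> cmod (poly q (cnj z))"
    using Suc(1)[of q] pq Suc(4) by auto
  have rl: "reflect_poly [:-r,1:] = [:1,-r:]"
    by (simp add: reflect_poly_def)
  have "cmod (poly (reflect_poly p) z) = cmod (1 - r*z) * cmod (poly (reflect_poly q) z)"
    unfolding pq(1) reflect_poly_mult rl poly_mult norm_mult by (simp add: mult.commute)
  also have "\<dots> \<le> cmod (cnj z - r) * cmod (poly q (cnj z))"
    using ineq1[OF assms(3) r1] IH by (simp add: mult_mono)
  also have "\<dots> = cmod (poly p (cnj z))" unfolding pq(1) poly_mult norm_mult by simp
  finally show ?case .
qed

lemma auxf: "(A::complex) \<noteq> 0 \<Longrightarrow> B \<noteq> 0 \<Longrightarrow> z*(A*C + B)/(A*B) = z/A + z*C/B"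
  by (simp add: field_simps)

lemma L2:
  fixes p :: "complex poly"
  assumes "p \<noteq> 0" "\<And>r. poly p r = 0 \<Longrightarrow> 1 \<le> cmod r" "cmod z = 1" "poly p z \<noteq> 0"
  shows "Re (z * poly (pderiv p) z / poly p z) \<le> degree p / 2"
  using assms(1,2,4)
proof (induction "degree p" arbitrary: p)
  case 0
  then obtain c where "p = [:c:]" by (metis degree_eq_zeroE)
  then show ?case by simp
next
  case (Suc m)
  obtain r q where pq: "p = [:-r,1:] * q" "degree q = m" "q \<noteq> 0" "\<And>x. poly q x = 0 \<Longrightarrow> poly p x = 0"
    using root_split[OF Suc(2)[symmetric]] by blast
  have r1: "1 \<le> cmod r" using Suc(4)[of r] pq(1) by simp
  have zr: "z \<noteq> r" using Suc(5) pq(1) by auto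
  have qz: "poly q z \<noteq> 0" using Suc(5) pq(1) by auto
  have IH: "Re (z * poly (pderiv q) z / poly q z) \<le> m / 2"
    using Suc(1)[of q] pq Suc(4) qz by auto
  have pd: "pderiv ([:-r,1:]*q) = [:-r,1:] * pderiv q + q * pderiv [:-r,1:]" by (rule pderiv_mult)
  have pd1: "pderiv [:-r,1:] = 1" by (simp add: pderiv_pCons)
  have "poly (pderiv p) z = (z - r) * poly (pderiv q) z + poly q z"
    unfolding pq(1) pd pd1 by (simp add: algebra_simps)
  moreover have "poly p z = (z - r) * poly q z" unfolding pq(1) by (simp add: algebra_simps)
  ultimately have "z * poly (pderiv p) z / poly p z = z * ((z - r) * poly (pderiv q) z + poly q z) / ((z - r) * poly q z)"
    by simp
  also have "\<dots> = z / (z - r) + z * poly (pderiv q) z / poly q z"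
    by (rule auxf) (use zr qz in auto)
  finally have "z * poly (pderiv p) z / poly p z = z / (z - r) + z * poly (pderiv q) z / poly q z" .
  then have "Re (z * poly (pderiv p) z / poly p z) = Re (z / (z - r)) + Re (z * poly (pderiv q) z / poly q z)"
    by simp
  also have "\<dots> \<le> 1/2 + m/2" using ineq2[OF assms(3) r1 zr] IH by linarith
  finally show ?case using Suc(2) by simp
qed



definition RR :: "(nat \<Rightarrow> complex) \<Rightarrow> nat set \<Rightarrow> complex fps" where
  "RR z K = (\<Prod>k\<in>K. 1 - fps_const (z k) * fps_X)"

definition GG :: "(nat \<Rightarrow> complex) \<Rightarrow> nat set \<Rightarrow> complex fps" where
  "GG z K = Abs_fps (\<lambda>m. if m = 0 then 0 else \<Sum>k\<in>K. z k ^ m)"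

lemma geo_fps: "(1 - fps_const (c::complex) * fps_X) * Abs_fps (\<lambda>m. if m = 0 then 0 else c^m) = fps_const c * fps_X"
proof -
  let ?H = "Abs_fps (\<lambda>m. if m = 0 then 0 else c^m)"
  have e: "(1 - fps_const c * fps_X) * ?H = ?H - fps_const c * (fps_X * ?H)" by (simp only: left_diff_distrib mult.left_neutral mult.assoc)
  show ?thesis unfolding e
  proof (rule fps_ext)
    fix m
    show "fps_nth (?H - fps_const c * (fps_X * ?H)) m = fps_nth (fps_const c * fps_X) m"
      by (cases m; cases "m - 1") auto
  qed
qed

lemma N1:
  assumes "finite K"
  shows "- fps_X * fps_deriv (RR z K) = RR z K * GG z K"
  using assms
proof (induction K rule: finite_induct)
  case empty
  have "GG z {} = 0" by (simp add: GG_def fps_eq_iff)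
  then show ?case by (simp add: RR_def)
next
  case (insert a K)
  let ?L = "1 - fps_const (z a) * fps_X"
  let ?H = "Abs_fps (\<lambda>m. if m = 0 then 0 else z a ^ m)"
  have R: "RR z (insert a K) = ?L * RR z K" using insert by (simp add: RR_def)
  have G: "GG z (insert a K) = GG z K + ?H" using insert by (simp add: GG_def fps_eq_iff)
  have "- fps_X * fps_deriv (RR z (insert a K)) = ?L * (- fps_X * fps_deriv (RR z K)) + fps_const (z a) * fps_X * RR z K"
    unfolding R by (simp add: algebra_simps)
  also have "\<dots> = ?L * (RR z K * GG z K) + (?L * ?H) * RR z K"
    by (simp only: insert.IH geo_fps[of "z a"])
  also have "\<dots> = RR z (insert a K) * GG z (insert a K)"
    unfolding R G by (simp add: algebra_simps)
  finally show ?case .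
qed

lemma N2:
  fixes R G :: "complex fps"
  assumes eq: "- fps_X * fps_deriv R = R * G" and R0: "fps_nth R 0 = 1" and G0: "fps_nth G 0 = 0"
    and rec: "\<And>m. 1 \<le> m \<Longrightarrow> m \<le> n \<Longrightarrow> of_nat m * fps_nth R m = - (if \<nu> \<le> m then fps_nth R (m - \<nu>) else 0)"
    and nu: "1 \<le> \<nu>"
  shows "m \<le> n \<Longrightarrow> 1 \<le> m \<Longrightarrow> fps_nth G m = (if m = \<nu> then 1 else 0)"
proof (induction m rule: less_induct)
  case (less m)
  have lhs: "fps_nth (- fps_X * fps_deriv R) m = - (of_nat m * fps_nth R m)"
    using less.prems by (cases m) auto
  have "fps_nth (R * G) m = (\<Sum>i=0..m. fps_nth R i * fps_nth G (m-i))" by (rule fps_mult_nth)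
  also have "\<dots> = fps_nth R 0 * fps_nth G m + (\<Sum>i=1..m. fps_nth R i * fps_nth G (m-i))"
    by (simp add: sum.atLeast_Suc_atMost)
  also have "(\<Sum>i=1..m. fps_nth R i * fps_nth G (m-i)) = (\<Sum>i=1..m. if i = m - \<nu> then (if \<nu> < m then fps_nth R i else 0) else 0)"
  proof (rule sum.cong)
    fix i assume i: "i \<in> {1..m}"
    show "fps_nth R i * fps_nth G (m-i) = (if i = m - \<nu> then (if \<nu> < m then fps_nth R i else 0) else 0)"
    proof (cases "i = m")
      case True then show ?thesis using G0 nu by auto
    next
      case False
      then have "fps_nth G (m-i) = (if m - i = \<nu> then 1 else 0)"
        using less.IH[of "m-i"] less.prems i by auto
      then show ?thesis using i False by auto
    qed
  qed simp
  also have "\<dots> = (if \<nu> < m then fps_nth R (m - \<nu>) else 0)"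
    by (subst sum.delta) (auto)
  finally have "fps_nth (R * G) m = fps_nth G m + (if \<nu> < m then fps_nth R (m - \<nu>) else 0)" using R0 by simp
  then have "fps_nth G m = - (of_nat m * fps_nth R m) - (if \<nu> < m then fps_nth R (m - \<nu>) else 0)"
    using eq lhs by (metis add_diff_cancel_right')
  also have "\<dots> = (if \<nu> \<le> m then fps_nth R (m - \<nu>) else 0) - (if \<nu> < m then fps_nth R (m - \<nu>) else 0)"
    using rec[of m] less.prems by simp
  also have "\<dots> = (if m = \<nu> then 1 else 0)" using R0 by auto
  finally show ?case .
qed



lemma aux_div: "(a::complex) / (b * c) * x = (a * x / b) / c"
  by (simp only: divide_divide_eq_left times_divide_eq_left)

lemma poly_s_fe:
  assumes "1 \<le> \<nu>"
  shows "poly (s_poly n \<nu>) x = fe (n div \<nu>) (-(x^\<nu>) / of_nat \<nu>)"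
  unfolding poly_s fe_def
proof (rule sum.cong)
  fix j
  show "cc \<nu> j * x ^ (\<nu> * j) = (-(x ^ \<nu>) / of_nat \<nu>) ^ j / of_nat (fact j)"
  proof -
    have h: "(-(x ^ \<nu>) / of_nat \<nu>) ^ j = (-1)^j * x^(\<nu>*j) / of_nat (\<nu>^j)"
    proof -
      have m: "-(x ^ \<nu>) / (of_nat \<nu> :: complex) = ((-1) * x ^ \<nu>) / of_nat \<nu>" by simp
      show ?thesis unfolding m power_divide power_mult_distrib power_mult of_nat_power ..
    qed
    show ?thesis unfolding cc_def h by (rule aux_div)
  qed
qed simp

lemma s_nz:
  assumes "1 \<le> \<nu>" "\<nu> \<le> n" "2 \<le> n" "cmod x \<le> 1"
  shows "poly (s_poly n \<nu>) x \<noteq> 0"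
proof -
  let ?w = "-(x^\<nu>) / of_nat \<nu> :: complex"
  have xn: "cmod x ^ \<nu> \<le> 1" using assms(4) by (simp add: power_le_one)
  have cw: "cmod ?w = cmod x ^ \<nu> / \<nu>" by (simp add: norm_divide norm_power)
  have "cmod ?w \<le> 1" unfolding cw using xn assms(1)
    by (simp add: divide_simps)
  moreover have "2 \<le> n div \<nu> \<or> cmod ?w < 1"
  proof (cases "\<nu> = 1")
    case True then show ?thesis using assms by simp
  next
    case False
    then have "2 \<le> \<nu>" using assms by simp
    then have "real \<nu> \<ge> 2" by simp
    then have "cmod x ^ \<nu> / \<nu> < 1" using xn by (simp add: divide_less_eq)
    then show ?thesis unfolding cw by simp
  qed
  ultimately show ?thesis using fe_nz poly_s_fe assms(1) by simp
qed

lemma deg_s: "degree (s_poly n \<nu>) \<le> n"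
  unfolding s_poly_def
proof (rule degree_sum_le)
  fix j assume "j \<in> {..n div \<nu>}"
  then have "\<nu> * j \<le> n" using nuj_le by simp
  then show "degree (smult ((-1)^j / (of_nat (\<nu>^j) * of_nat (fact j))) (monom (1::complex) (\<nu>*j))) \<le> n"
    by (metis degree_smult_le degree_monom_le le_trans)
qed simp

lemma sr_eq:
  assumes "x \<noteq> 0"
  shows "poly (s_refl_poly n \<nu>) x = x^(2*n+1) * poly (s_poly n \<nu>) (1/x)"
  unfolding poly_s poly_sr sum_distrib_left
proof (rule sum.cong)
  fix j assume "j \<in> {..n div \<nu>}"
  then have "\<nu> * j \<le> 2*n+1" using nuj_le[of j n \<nu>] by simp
  then show "cc \<nu> j * x ^ (2 * n + 1 - \<nu> * j) = x ^ (2 * n + 1) * (cc \<nu> j * (1 / x) ^ (\<nu> * j))"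
  proof -
    have "x ^ (2 * n + 1 - \<nu> * j) = x^(2*n+1) / x^(\<nu>*j)" using assms \<open>\<nu> * j \<le> 2*n+1\<close> by (simp add: power_diff)
    then show ?thesis by (simp add: power_one_over)
  qed
qed simp

lemma s_cnj: "poly (s_poly n \<nu>) (cnj x) = cnj (poly (s_poly n \<nu>) x)"
  unfolding poly_s by simp

lemma P_poly_eval: "poly (P_poly n \<nu>) x = poly (s_poly n \<nu>) x + poly (s_refl_poly n \<nu>) x"
  by (simp add: P_poly_def)

lemma no_root_inside:
  assumes "1 \<le> \<nu>" "\<nu> \<le> n" "2 \<le> n" "cmod x < 1"
  shows "poly (P_poly n \<nu>) x \<noteq> 0"
proof (cases "x = 0")
  case True
  have "poly (s_refl_poly n \<nu>) 0 = 0" unfolding poly_sr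
  proof (rule sum.neutral, intro ballI)
    fix j assume "j \<in> {..n div \<nu>}"
    then have "\<nu>*j \<le> n" by (simp add: nuj_le)
    then show "cc \<nu> j * 0^(2*n+1-\<nu>*j) = 0" by simp
  qed
  then show ?thesis using True s_nz[OF assms(1-3), of 0] by (simp add: P_poly_eval)
next
  case False
  let ?s = "s_poly n \<nu>"
  let ?d = "degree ?s"
  have d: "?d \<le> n" by (rule deg_s)
  have sx: "poly ?s x \<noteq> 0" using s_nz assms by simp
  have s0: "?s \<noteq> 0" using sx by auto
  have roots: "\<And>r. poly ?s r = 0 \<Longrightarrow> 1 \<le> cmod r" using s_nz[OF assms(1-3)] by force
  have "poly (s_refl_poly n \<nu>) x = x^(2*n+1-?d) * poly (reflect_poly ?s) x"
  proof -
    have "x^(2*n+1) = x^(2*n+1-?d) * x^?d" using d by (simp add: power_add[symmetric])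
    then show ?thesis unfolding sr_eq[OF False] poly_reflect_poly_nz[OF False]
      by (simp add: inverse_eq_divide mult.assoc)
  qed
  then have "cmod (poly (s_refl_poly n \<nu>) x) = cmod x ^ (2*n+1-?d) * cmod (poly (reflect_poly ?s) x)"
    by (simp add: norm_mult norm_power)
  also have "\<dots> \<le> cmod x ^ (2*n+1-?d) * cmod (poly ?s (cnj x))"
    using L1[OF s0 roots] assms(4) by (simp add: mult_left_mono)
  also have "\<dots> = cmod x ^ (2*n+1-?d) * cmod (poly ?s x)" by (simp add: s_cnj)
  also have "\<dots> < cmod (poly ?s x)"
  proof -
    have "cmod x ^ (2*n+1-?d) < 1" using assms(4) d by (simp add: power_less_one_iff)
    then show ?thesis using sx by simp
  qed
  finally have "cmod (poly (s_refl_poly n \<nu>) x) < cmod (poly ?s x)" .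
  then show ?thesis unfolding P_poly_eval
  proof (intro notI)
    assume lt: "cmod (poly (s_refl_poly n \<nu>) x) < cmod (poly ?s x)"
      and eq: "poly ?s x + poly (s_refl_poly n \<nu>) x = 0"
    from eq have "poly (s_refl_poly n \<nu>) x = - poly ?s x" by (simp add: add_eq_0_iff)
    then have "cmod (poly (s_refl_poly n \<nu>) x) = cmod (poly ?s x)" by simp
    then show False using lt by simp
  qed
qed

lemma roots_on_circle:
  assumes "1 \<le> \<nu>" "\<nu> \<le> n" "2 \<le> n" "poly (P_poly n \<nu>) x = 0"
  shows "cmod x = 1"
proof (rule ccontr)
  assume ne: "cmod x \<noteq> 1"
  show False
  proof (cases "cmod x < 1")
    case True then show ?thesis using no_root_inside assms by blast
  next
    case False
    then have gt: "cmod x > 1" using ne by simp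
    then have x0: "x \<noteq> 0" by auto
    have h1: "poly (s_refl_poly n \<nu>) (1/x) = poly (s_poly n \<nu>) x / x^(2*n+1)"
      using sr_eq[of "1/x"] x0 by (simp add: power_one_over)
    have h2: "poly (s_poly n \<nu>) (1/x) = poly (s_refl_poly n \<nu>) x / x^(2*n+1)"
      using sr_eq[OF x0] x0 by (simp add: eq_divide_eq mult.commute)
    have "poly (P_poly n \<nu>) (1/x) = poly (P_poly n \<nu>) x / x^(2*n+1)"
      unfolding P_poly_eval h1 h2 by (simp add: add_divide_distrib)
    then have "poly (P_poly n \<nu>) (1/x) = 0" using assms(4) by simp
    moreover have "cmod (1/x) < 1" using gt by (simp add: norm_divide divide_less_eq_1)
    ultimately show False using no_root_inside assms(1-3) by blast
  qed
qed



lemma coeff_s: "coeff (s_poly n \<nu>) m = (\<Sum>j\<le>n div \<nu>. if \<nu>*j = m then cc \<nu> j else 0)"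
  unfolding s_poly_def coeff_sum coeff_smult coeff_monom cc_def by (rule sum.cong) auto

lemma coeff_sr: "coeff (s_refl_poly n \<nu>) m = (\<Sum>j\<le>n div \<nu>. if 2*n+1-\<nu>*j = m then cc \<nu> j else 0)"
  unfolding s_refl_poly_def coeff_sum coeff_smult coeff_monom cc_def by (rule sum.cong) auto

lemma coeff_s':
  assumes "1 \<le> \<nu>" "m \<le> n"
  shows "coeff (s_poly n \<nu>) m = (if \<nu> dvd m then cc \<nu> (m div \<nu>) else 0)"
proof -
  have "coeff (s_poly n \<nu>) m = (\<Sum>j\<le>n div \<nu>. if j = m div \<nu> then (if \<nu> dvd m then cc \<nu> j else 0) else 0)"
    unfolding coeff_s
  proof (rule sum.cong)
    fix j assume "j \<in> {..n div \<nu>}"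
    show "(if \<nu>*j = m then cc \<nu> j else 0) = (if j = m div \<nu> then (if \<nu> dvd m then cc \<nu> j else 0) else 0)"
      using assms(1) by auto
  qed simp
  also have "\<dots> = (if \<nu> dvd m then cc \<nu> (m div \<nu>) else 0)"
    using assms by (simp add: div_le_mono)
  finally show ?thesis .
qed

lemma aux_cc: "(V::complex) \<noteq> 0 \<Longrightarrow> K \<noteq> 0 \<Longrightarrow> W \<noteq> 0 \<Longrightarrow> F \<noteq> 0 \<Longrightarrow>
   (V*K) * (-s/((V*W)*(K*F))) = -(s/(W*F))"
  by (simp add: field_simps)

lemma cc_rec: assumes "1 \<le> \<nu>" shows "of_nat (\<nu> * Suc i) * cc \<nu> (Suc i) = - cc \<nu> i"
proof -
  have e: "cc \<nu> (Suc i) = -((-1)^i) / ((of_nat \<nu> * of_nat (\<nu>^i)) * (of_nat (Suc i) * of_nat (fact i)))"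
    unfolding cc_def by (simp only: power_Suc fact_Suc of_nat_mult) simp
  have "of_nat (\<nu> * Suc i) * cc \<nu> (Suc i) = (of_nat \<nu> * of_nat (Suc i)) * (-((-1)^i) / ((of_nat \<nu> * of_nat (\<nu>^i)) * (of_nat (Suc i) * of_nat (fact i))))"
    unfolding e by (simp only: of_nat_mult)
  also have "\<dots> = -((-1)^i / (of_nat (\<nu>^i) * of_nat (fact i)))"
    by (rule aux_cc) (use assms in \<open>auto simp del: of_nat_Suc\<close>)
  finally show ?thesis by (simp only: cc_def)
qed

lemma rec_s:
  assumes "1 \<le> \<nu>" "1 \<le> m" "m \<le> n"
  shows "of_nat m * coeff (s_poly n \<nu>) m = - (if \<nu> \<le> m then coeff (s_poly n \<nu>) (m - \<nu>) else 0)"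
proof (cases "\<nu> dvd m")
  case True
  then obtain j where m: "m = \<nu> * j" by blast
  then have "j \<noteq> 0" using assms by auto
  then obtain i where j: "j = Suc i" by (cases j) auto
  have "\<nu> \<le> m" using m j by simp
  moreover have "m - \<nu> = \<nu> * i" using m j by simp
  ultimately have e2: "coeff (s_poly n \<nu>) (m - \<nu>) = cc \<nu> i" using coeff_s'[OF assms(1), of "m-\<nu>"] assms(1,3) by simp
  have e1: "coeff (s_poly n \<nu>) m = cc \<nu> (Suc i)" using coeff_s'[OF assms(1,3)] m j assms(1) by simp
  show ?thesis unfolding e1 e2 using \<open>\<nu> \<le> m\<close> cc_rec[OF assms(1), of i] m j by simp
next
  case False
  have "\<not> \<nu> dvd (m - \<nu>)" if "\<nu> \<le> m"
  proof
    assume "\<nu> dvd (m - \<nu>)"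
    then have "\<nu> dvd (m - \<nu>) + \<nu>" by simp
    then show False using False that by simp
  qed
  then show ?thesis using False assms coeff_s' by auto
qed



lemma cnj_unit: "cmod a = 1 \<Longrightarrow> cnj a = 1 / a"
proof -
  assume a: "cmod a = 1"
  then have "a \<noteq> 0" by auto
  moreover have "a * cnj a = 1" using complex_norm_square[of a] a by simp
  ultimately show ?thesis by (simp add: eq_divide_eq mult.commute)
qed

lemma no_double:
  assumes nu: "1 \<le> \<nu>" "\<nu> \<le> n" "2 \<le> n" and a1: "cmod a = 1"
    and P0: "poly (P_poly n \<nu>) a = 0" and dP0: "poly (pderiv (P_poly n \<nu>)) a = 0"
  shows False
proof -
  let ?s = "s_poly n \<nu>" and ?sr = "s_refl_poly n \<nu>" and ?N = "2*n+1"
  define S where "S = poly ?s a"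
  define D where "D = a * poly (pderiv ?s) a"
  define u where "u = a ^ ?N"
  have a0: "a \<noteq> 0" using a1 by auto
  have ca: "cnj a = 1 / a" using cnj_unit[OF a1] .
  have S0: "S \<noteq> 0" unfolding S_def using s_nz nu a1 by simp
  have hsr: "poly ?sr a = u * cnj S"
    unfolding sr_eq[OF a0] u_def S_def s_cnj[symmetric] ca ..
  have pw: "a ^ (?N - \<nu>*j) = u * cnj a ^ (\<nu>*j)" if "j \<le> n div \<nu>" for j
  proof -
    have "\<nu>*j \<le> ?N" using nuj_le[OF that] by simp
    then show ?thesis unfolding u_def ca using a0 by (simp add: power_diff power_one_over)
  qed
  have cD: "cnj D = (\<Sum>j\<le>n div \<nu>. cc \<nu> j * of_nat (\<nu>*j) * cnj a ^ (\<nu>*j))"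
    unfolding D_def poly_ds by simp
  have cS: "cnj S = (\<Sum>j\<le>n div \<nu>. cc \<nu> j * cnj a ^ (\<nu>*j))"
    unfolding S_def poly_s by simp
  have hdsr: "a * poly (pderiv ?sr) a = u * (of_nat ?N * cnj S - cnj D)"
  proof -
    have "a * poly (pderiv ?sr) a = (\<Sum>j\<le>n div \<nu>. u * (of_nat ?N * (cc \<nu> j * cnj a ^ (\<nu>*j)) - cc \<nu> j * of_nat (\<nu>*j) * cnj a ^ (\<nu>*j)))"
      unfolding poly_dsr
    proof (rule sum.cong)
      fix j assume j: "j \<in> {..n div \<nu>}"
      then have le: "\<nu>*j \<le> ?N" using nuj_le[of j n \<nu>] by simp
      have h1: "(of_nat (?N - \<nu>*j)::complex) = of_nat ?N - of_nat (\<nu>*j)" using le by (simp only: of_nat_diff)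
      have h2: "a^(?N - \<nu>*j) = u * cnj a ^(\<nu>*j)" using pw[of j] j by simp
      show "cc \<nu> j * of_nat (?N - \<nu>*j) * a ^ (?N - \<nu>*j) = u * (of_nat ?N * (cc \<nu> j * cnj a ^ (\<nu>*j)) - cc \<nu> j * of_nat (\<nu>*j) * cnj a ^ (\<nu>*j))"
        unfolding h1 h2 by (simp add: algebra_simps)
    qed simp
    also have "\<dots> = u * (of_nat ?N * cnj S - cnj D)"
      by (simp only: cS cD sum_distrib_left sum_subtractf[symmetric])
    finally show ?thesis .
  qed
  have e1: "S + u * cnj S = 0" using P0 hsr unfolding P_poly_eval S_def by simp
  have e2: "D + u * (of_nat ?N * cnj S - cnj D) = 0"
  proof -
    have "a * poly (pderiv (P_poly n \<nu>)) a = D + a * poly (pderiv ?sr) a"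
      unfolding P_poly_def D_def by (simp add: pderiv_add algebra_simps)
    then show ?thesis using dP0 hdsr by simp
  qed
  define w where "w = D / S"
  have Dw: "D = w * S" unfolding w_def using S0 by simp
  have "S * (w + cnj w - of_nat ?N) = 0"
  proof -
    have "u * cnj S = - S" using e1 by (simp add: add_eq_0_iff)
    have "0 = w * S + of_nat ?N * (u * cnj S) - cnj w * (u * cnj S)"
      using e2 unfolding Dw by (simp add: algebra_simps)
    also have "\<dots> = S * (w + cnj w - of_nat ?N)"
      using \<open>u * cnj S = - S\<close> by (simp add: algebra_simps)
    finally show ?thesis by simp
  qed
  then have "w + cnj w = of_nat ?N" using S0 by simp
  then have "Re (w + cnj w) = Re (of_nat ?N)" by (simp only:)
  then have Rew: "2 * Re w = real ?N" by simp
  have sne: "?s \<noteq> 0" using S0 unfolding S_def by auto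
  have roots: "1 \<le> cmod r" if "poly ?s r = 0" for r
  proof (rule ccontr)
    assume "\<not> 1 \<le> cmod r"
    then show False using s_nz[OF nu, of r] that by simp
  qed
  have "Re w \<le> degree ?s / 2"
    using L2[OF sne roots a1] S0 unfolding w_def D_def S_def by simp
  also have "\<dots> \<le> real n / 2" using deg_s[of n \<nu>] by simp
  finally have "Re w \<le> real n / 2" .
  moreover have "real ?N = 2 * real n + 1" by simp
  ultimately show False using Rew by linarith
qed



lemma fps_lin: "fps_of_poly [:1, - c:] = 1 - fps_const (c::complex) * fps_X"
  by (simp add: fps_of_poly_pCons fps_of_poly_const fps_const_neg[symmetric] algebra_simps del: fps_const_neg)

lemma refl_lin: "reflect_poly [:- c, 1:] = [:1, - (c::complex):]"
  by (simp add: reflect_poly_def)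

lemma dbl_root: "poly (pderiv ([:-a,1:] * ([:-a,1:] * Q))) (a::complex) = 0"
  by (simp only: pderiv_mult poly_add poly_mult poly_pCons poly_0) simp

lemma trig_term:
  assumes "cmod zk = 1"
  shows "cos (real m * (t - Arg2pi zk)) = Re (cis (real m * t) * cnj (zk ^ m))"
    and "sin (real m * (t - Arg2pi zk)) = Im (cis (real m * t) * cnj (zk ^ m))"
proof -
  define th where "th = Arg2pi zk"
  have zk: "zk = cis th" unfolding th_def using assms complex_norm_eq_1_exp cis_conv_exp by metis
  have c1: "cnj (zk ^ m) = cis (real m * (- th))"
    unfolding zk by (simp only: complex_cnj_power cis_cnj) (rule Complex.DeMoivre)
  have "cis (real m * t) * cnj (zk ^ m) = cis (real m * (t - th))"
    unfolding c1 cis_mult by (simp add: algebra_simps)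
  then show "cos (real m * (t - Arg2pi zk)) = Re (cis (real m * t) * cnj (zk ^ m))"
    and "sin (real m * (t - Arg2pi zk)) = Im (cis (real m * t) * cnj (zk ^ m))" unfolding th_def by simp_all
qed

theorem theorem2p3:
  fixes n \<nu> :: nat and z :: "nat \<Rightarrow> complex"
  assumes "n \<ge> 2" and "\<nu> \<in> {1..n}"
    and roots: "P_poly n \<nu> = (\<Prod>k=1..2*n+1. [:- z k, 1:])"
  shows "(\<forall>k\<in>{1..2*n+1}. cmod (z k) = 1)
       \<and> inj_on (\<lambda>k. Arg2pi (z k)) {1..2*n+1}
       \<and> (\<forall>(a::nat \<Rightarrow> real) (b::nat \<Rightarrow> real) (t::real).
            tau a b \<nu> t = (\<Sum>k=1..2*n+1. trig_T a b n (t - Arg2pi (z k))))"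
proof -
  define K where "K = {1..2*n+1}"
  have fK: "finite K" unfolding K_def by simp
  have nu1: "1 \<le> \<nu>" and nun: "\<nu> \<le> n" using assms(2) by auto
  have n2: "2 \<le> n" using assms(1) .
  have rootsK: "P_poly n \<nu> = (\<Prod>k\<in>K. [:- z k, 1:])" using roots unfolding K_def .
  have hroot: "poly (P_poly n \<nu>) (z k) = 0" if "k \<in> K" for k
  proof -
    have "poly (P_poly n \<nu>) (z k) = (\<Prod>k'\<in>K. poly [:- z k', 1:] (z k))"
      unfolding rootsK poly_prod ..
    also have "\<dots> = 0" using fK that by (auto intro: prod_zero)
    finally show ?thesis .
  qed
  have hcirc: "cmod (z k) = 1" if "k \<in> K" for k
    using roots_on_circle[OF nu1 nun n2 hroot[OF that]] .
  have hinj: "i = j" if "i \<in> K" "j \<in> K" "z i = z j" for i j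
  proof (rule ccontr)
    assume ij: "i \<noteq> j"
    let ?a = "z i"
    let ?L = "[:- ?a, 1:]"
    have "P_poly n \<nu> = ?L * (\<Prod>k\<in>K - {i}. [:- z k, 1:])"
      unfolding rootsK by (rule prod.remove[OF fK that(1)])
    also have "(\<Prod>k\<in>K - {i}. [:- z k, 1:]) = ?L * (\<Prod>k\<in>K - {i} - {j}. [:- z k, 1:])"
      unfolding that(3) by (rule prod.remove) (use fK that ij in auto)
    finally have Pf: "P_poly n \<nu> = ?L * (?L * (\<Prod>k\<in>K - {i} - {j}. [:- z k, 1:]))" .
    have "poly (pderiv (P_poly n \<nu>)) ?a = 0"
      unfolding Pf by (rule dbl_root)
    then show False using no_double[OF nu1 nun n2 hcirc[OF that(1)] hroot[OF that(1)]] by simp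
  qed
  have injA: "inj_on (\<lambda>k. Arg2pi (z k)) K"
  proof (rule inj_onI)
    fix i j assume ij: "i \<in> K" "j \<in> K" "Arg2pi (z i) = Arg2pi (z j)"
    have "z i = exp (\<i> * of_real (Arg2pi (z i)))" using hcirc[OF ij(1)] complex_norm_eq_1_exp by metis
    also have "\<dots> = z j" using ij(3) hcirc[OF ij(2)] complex_norm_eq_1_exp by metis
    finally show "i = j" using hinj ij by blast
  qed
  let ?R = "RR z K" and ?G = "GG z K"
  let ?s = "s_poly n \<nu>"
  have degP: "degree (P_poly n \<nu>) = 2*n+1"
  proof -
    have "degree (P_poly n \<nu>) = (\<Sum>k\<in>K. degree [:- z k, 1:])"
      unfolding rootsK by (rule degree_prod_eq_sum_degree) auto
    also have "\<dots> = 2*n+1" unfolding K_def by simp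
    finally show ?thesis .
  qed
  have Rp: "?R = fps_of_poly (reflect_poly (P_poly n \<nu>))"
    unfolding rootsK reflect_poly_prod refl_lin fps_of_poly_prod fps_lin RR_def ..
  have coeffR: "fps_nth ?R m = coeff ?s m" if "m \<le> n" for m
  proof -
    have "fps_nth ?R m = coeff (P_poly n \<nu>) (2*n+1 - m)"
      unfolding Rp using that degP by (simp add: coeff_reflect_poly)
    also have "\<dots> = coeff ?s (2*n+1-m) + coeff (s_refl_poly n \<nu>) (2*n+1-m)"
      by (simp add: P_poly_def)
    also have "coeff ?s (2*n+1-m) = 0"
      using deg_s[of n \<nu>] that by (intro coeff_eq_0) simp
    also have "coeff (s_refl_poly n \<nu>) (2*n+1-m) = coeff ?s m"
      unfolding coeff_sr coeff_s
    proof (rule sum.cong)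
      fix j assume "j \<in> {..n div \<nu>}"
      then have "\<nu>*j \<le> n" using nuj_le by simp
      then have "(2*n+1 - \<nu>*j = 2*n+1-m) = (\<nu>*j = m)" using that by auto
      then show "(if 2*n+1 - \<nu>*j = 2*n+1-m then cc \<nu> j else 0) = (if \<nu>*j = m then cc \<nu> j else 0)"
        by simp
    qed simp
    finally show ?thesis by simp
  qed
  have R0: "fps_nth ?R 0 = 1"
    using coeffR[of 0] coeff_s'[OF nu1, of 0 n] by (simp add: cc_def)
  have G0: "fps_nth ?G 0 = 0" by (simp add: GG_def)
  have recR: "of_nat m * fps_nth ?R m = - (if \<nu> \<le> m then fps_nth ?R (m - \<nu>) else 0)"
    if "1 \<le> m" "m \<le> n" for m
    using rec_s[OF nu1 that] coeffR that by simp
  have ps: "(\<Sum>k\<in>K. z k ^ m) = (if m = \<nu> then 1 else 0)" if "1 \<le> m" "m \<le> n" for m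
  proof -
    have "fps_nth ?G m = (if m = \<nu> then 1 else 0)"
      using N2[OF N1[OF fK] R0 G0 recR nu1] that by blast
    then show ?thesis using that by (simp add: GG_def)
  qed
  have trig: "tau a b \<nu> t = (\<Sum>k\<in>K. trig_T a b n (t - Arg2pi (z k)))" for a b t
  proof -
    have inner: "(\<Sum>k\<in>K. tau a b m (t - Arg2pi (z k))) = (if m = \<nu> then tau a b m t else 0)"
      if m: "m \<in> {1..n}" for m
    proof -
      have "(\<Sum>k\<in>K. tau a b m (t - Arg2pi (z k)))
          = a m * Re (cis (real m * t) * cnj (\<Sum>k\<in>K. z k ^ m)) + b m * Im (cis (real m * t) * cnj (\<Sum>k\<in>K. z k ^ m))"
        unfolding tau_def sum.distrib cnj_sum sum_distrib_left[symmetric] Re_sum[symmetric] Im_sum[symmetric]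
        using trig_term hcirc by (simp add: sum_distrib_left)
      also have "\<dots> = (if m = \<nu> then tau a b m t else 0)"
        using ps[of m] m by (simp add: tau_def)
      finally show ?thesis .
    qed
    have "(\<Sum>k\<in>K. trig_T a b n (t - Arg2pi (z k))) = (\<Sum>m=1..n. \<Sum>k\<in>K. tau a b m (t - Arg2pi (z k)))"
      unfolding trig_T_def by (rule sum.swap)
    also have "\<dots> = (\<Sum>m=1..n. if m = \<nu> then tau a b m t else 0)"
      using inner by (intro sum.cong) auto
    also have "\<dots> = tau a b \<nu> t" using nu1 nun by (simp add: sum.delta)
    finally show ?thesis by simp
  qed
  show ?thesis using hcirc injA trig unfolding K_def by blast
qed

end
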